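(* Let $G$ be a simple graph, not necessarily connected. Then the following are equivalent: (i) $\gamma(G)\le 1$; (ii) $G$ is $\{P_3,2P_2\}$-free, i.e. no induced subgraph of $G$ is isomorphic to the path $P_3$ on three vertices or to the disjoint union $2P_2$ of two edges; (iii) $G$ is the disjoint union of a complete graph and a trivial (edgeless) graph.
   Context: For a finite graph $G$ and indeterminates $X_G=\{x_u : u\in V(G)\}$, the generalized Laplacian matrix $L(G,X_G)$ is the $V(G)\times V(G)$ matrix over $\mathbb{Z}[X_G]$ with $(u,u)$-entry $x_u$ and $(u,v)$-entry $-m_{uv}$ for $u\ne v$, $m_{uv}$ being the number of edges between $u$ and $v$. The $i$-th critical ideal $I_i(G,X_G)$ is the ideal of $\mathbb{Z}[X_G]$ generated by all $i\times i$ minors of $L(G,X_G)$ (with $I_i=\langle1\rangle$ for $i<1$, $I_i=\langle 0\rangle$ for $i>|V(G)|$). The algebraic co-rank $\gamma(G)$ is the number of critical ideals of $G$ equal to $\langle 1\rangle$. *)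

theory Defs
  imports "HOL-Library.Poly_Mapping" "HOL-Combinatorics.Permutations"
begin

text \<open>Multivariate integer polynomials in indeterminates indexed by 'a:
  Z[X] is represented as (monomial => coefficient), with monomials ('a =>0 nat).\<close>
type_synonym 'a mpoly_int = "('a \<Rightarrow>\<^sub>0 nat) \<Rightarrow>\<^sub>0 int"

definition Var :: "'a \<Rightarrow> 'a mpoly_int" where
  "Var u = Poly_Mapping.single (Poly_Mapping.single u 1) 1"

definition simple_graph :: "'a set \<Rightarrow> ('a \<Rightarrow> 'a \<Rightarrow> bool) \<Rightarrow> bool" where
  "simple_graph V E \<longleftrightarrow> finite V \<and> (\<forall>u v. E u v \<longrightarrow> u \<in> V \<and> v \<in> V)
     \<and> (\<forall>u v. E u v \<longrightarrow> E v u) \<and> (\<forall>u. \<not> E u u)"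

definition gen_laplacian :: "('a \<Rightarrow> 'a \<Rightarrow> bool) \<Rightarrow> 'a \<Rightarrow> 'a \<Rightarrow> 'a mpoly_int" where
  "gen_laplacian E u v = (if u = v then Var u else - (if E u v then 1 else 0))"

definition det_k :: "nat \<Rightarrow> (nat \<Rightarrow> nat \<Rightarrow> 'b::comm_ring_1) \<Rightarrow> 'b" where
  "det_k k M = (\<Sum>p\<in>{p. p permutes {..<k}}. of_int (sign p) * (\<Prod>i<k. M i (p i)))"

definition minor :: "('a::linorder \<Rightarrow> 'a \<Rightarrow> 'b::comm_ring_1) \<Rightarrow> 'a set \<Rightarrow> 'a set \<Rightarrow> 'b" where
  "minor M R C = det_k (card R)
     (\<lambda>i j. M (sorted_list_of_set R ! i) (sorted_list_of_set C ! j))"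

definition ideal_gen :: "'b::comm_ring_1 set \<Rightarrow> 'b set" where
  "ideal_gen S = {x. \<exists>F c. finite F \<and> F \<subseteq> S \<and> x = (\<Sum>f\<in>F. c f * f)}"

definition critical_ideal :: "'a::linorder set \<Rightarrow> ('a \<Rightarrow> 'a \<Rightarrow> bool) \<Rightarrow> nat \<Rightarrow> 'a mpoly_int set" where
  "critical_ideal V E i =
     (if i < 1 then UNIV
      else if i > card V then {0}
      else ideal_gen {minor (gen_laplacian E) R C | R C.
                        R \<subseteq> V \<and> C \<subseteq> V \<and> card R = i \<and> card C = i})"

definition alg_corank :: "'a::linorder set \<Rightarrow> ('a \<Rightarrow> 'a \<Rightarrow> bool) \<Rightarrow> nat" where
  "alg_corank V E = card {i \<in> {1..card V}. critical_ideal V E i = UNIV}"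

definition P3_free :: "'a set \<Rightarrow> ('a \<Rightarrow> 'a \<Rightarrow> bool) \<Rightarrow> bool" where
  "P3_free V E \<longleftrightarrow> \<not> (\<exists>a\<in>V. \<exists>b\<in>V. \<exists>c\<in>V. distinct [a, b, c] \<and> E a b \<and> E b c \<and> \<not> E a c)"

definition twoP2_free :: "'a set \<Rightarrow> ('a \<Rightarrow> 'a \<Rightarrow> bool) \<Rightarrow> bool" where
  "twoP2_free V E \<longleftrightarrow> \<not> (\<exists>a\<in>V. \<exists>b\<in>V. \<exists>c\<in>V. \<exists>d\<in>V. distinct [a, b, c, d]
      \<and> E a b \<and> E c d \<and> \<not> E a c \<and> \<not> E a d \<and> \<not> E b c \<and> \<not> E b d)"

definition complete_plus_trivial :: "'a set \<Rightarrow> ('a \<Rightarrow> 'a \<Rightarrow> bool) \<Rightarrow> bool" where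
  "complete_plus_trivial V E \<longleftrightarrow>
     (\<exists>K \<subseteq> V. \<forall>u\<in>V. \<forall>v\<in>V. E u v \<longleftrightarrow> (u \<in> K \<and> v \<in> K \<and> u \<noteq> v))"

end

theory Submission
  imports Defs
begin

definition mon :: "('a \<Rightarrow> int) \<Rightarrow> ('a \<Rightarrow>\<^sub>0 nat) \<Rightarrow> int" where
  "mon x m = (\<Prod>u\<in>Poly_Mapping.keys m. x u ^ Poly_Mapping.lookup m u)"

definition ev :: "('a \<Rightarrow> int) \<Rightarrow> 'a mpoly_int \<Rightarrow> int" where
  "ev x f = (\<Sum>m\<in>Poly_Mapping.keys f. Poly_Mapping.lookup f m * mon x m)"

lemma mon_superset:
  assumes "finite S" "Poly_Mapping.keys m \<subseteq> S"
  shows "mon x m = (\<Prod>u\<in>S. x u ^ Poly_Mapping.lookup m u)"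
  unfolding mon_def
  by (rule prod.mono_neutral_left) (use assms in \<open>auto simp: in_keys_iff\<close>)

lemma mon_add: "mon x (a + b) = mon x a * mon x b"
proof -
  let ?S = "Poly_Mapping.keys a \<union> Poly_Mapping.keys b"
  have "mon x (a+b) = (\<Prod>u\<in>?S. x u ^ Poly_Mapping.lookup (a+b) u)"
    by (rule mon_superset) (auto simp: keys_add)
  also have "\<dots> = (\<Prod>u\<in>?S. x u ^ Poly_Mapping.lookup a u) * (\<Prod>u\<in>?S. x u ^ Poly_Mapping.lookup b u)"
    by (simp add: lookup_add power_add prod.distrib)
  also have "\<dots> = mon x a * mon x b"
    by (subst (1 2) mon_superset[of ?S]) auto
  finally show ?thesis .
qed

lemma mon_zero [simp]: "mon x 0 = 1" by (simp add: mon_def)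

lemma mon_single1: "mon x (Poly_Mapping.single u 1) = x u" by (simp add: mon_def)

lemma ev_superset:
  assumes "finite S" "Poly_Mapping.keys f \<subseteq> S"
  shows "ev x f = (\<Sum>m\<in>S. Poly_Mapping.lookup f m * mon x m)"
  unfolding ev_def
  by (rule sum.mono_neutral_left) (use assms in \<open>auto simp: in_keys_iff\<close>)

lemma ev_add: "ev x (f + g) = ev x f + ev x g"
proof -
  let ?S = "Poly_Mapping.keys f \<union> Poly_Mapping.keys g"
  have "ev x (f+g) = (\<Sum>m\<in>?S. Poly_Mapping.lookup (f+g) m * mon x m)"
    by (rule ev_superset) (auto simp: keys_add)
  also have "\<dots> = (\<Sum>m\<in>?S. Poly_Mapping.lookup f m * mon x m) + (\<Sum>m\<in>?S. Poly_Mapping.lookup g m * mon x m)"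
    by (simp add: lookup_add distrib_right sum.distrib)
  also have "\<dots> = ev x f + ev x g"
    by (subst (1 2) ev_superset[of ?S]) auto
  finally show ?thesis .
qed

lemma ev_zero [simp]: "ev x 0 = 0" by (simp add: ev_def)

lemma ev_single: "ev x (Poly_Mapping.single m c) = c * mon x m"
  by (simp add: ev_def)

lemma ev_sum: "ev x (sum h A) = (\<Sum>a\<in>A. ev x (h a))"
  by (induction A rule: infinite_finite_induct) (auto simp: ev_add)

lemma expand: "f = (\<Sum>m\<in>Poly_Mapping.keys f. Poly_Mapping.single m (Poly_Mapping.lookup f m))"
proof (rule poly_mapping_eqI)
  fix k
  show "Poly_Mapping.lookup f k = Poly_Mapping.lookup (\<Sum>m\<in>Poly_Mapping.keys f. Poly_Mapping.single m (Poly_Mapping.lookup f m)) k"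
    by (auto simp: lookup_sum lookup_single in_keys_iff when_def)
qed

lemma ev_mult: "ev x (f * g) = ev x f * ev x g"
proof -
  let ?F = "Poly_Mapping.keys f" and ?G = "Poly_Mapping.keys g"
  have "f * g = (\<Sum>a\<in>?F. Poly_Mapping.single a (Poly_Mapping.lookup f a)) *
                (\<Sum>b\<in>?G. Poly_Mapping.single b (Poly_Mapping.lookup g b))"
    by (subst (1) expand, subst (2) expand) (rule refl)
  also have "\<dots> = (\<Sum>a\<in>?F. \<Sum>b\<in>?G. Poly_Mapping.single (a+b) (Poly_Mapping.lookup f a * Poly_Mapping.lookup g b))"
    by (simp add: sum_product mult_single)
  finally have "ev x (f*g) = (\<Sum>a\<in>?F. \<Sum>b\<in>?G. Poly_Mapping.lookup f a * Poly_Mapping.lookup g b * mon x (a+b))"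
    by (simp add: ev_sum ev_single)
  also have "\<dots> = ev x f * ev x g"
    by (simp add: ev_def mon_add sum_product mult_ac)
  finally show ?thesis .
qed

lemma ev_one [simp]: "ev x 1 = 1"
  by (metis ev_single mon_zero mult_1 single_one)

lemma ev_of_int [simp]: "ev x (of_int k) = k"
  proof -
  have "(of_int k :: 'a mpoly_int) = Poly_Mapping.single 0 k" by (rule poly_mapping_eqI) (simp add: lookup_of_int lookup_single when_def)
  then show ?thesis by (simp add: ev_single)
qed

lemma ev_uminus [simp]: "ev x (- f) = - ev x f"
  by (metis add.inverse_unique ev_add ev_zero neg_eq_iff_add_eq_0)

lemma ev_prod: "ev x (prod h A) = (\<Prod>a\<in>A. ev x (h a))"
  by (induction A rule: infinite_finite_induct) (auto simp: ev_mult)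

lemma ev_det: "ev x (det_k k M) = det_k k (\<lambda>i j. ev x (M i j))"
  by (simp add: det_k_def ev_sum ev_mult ev_prod)

lemma ev_Var [simp]: "ev x (Var u) = x u"
  unfolding Var_def ev_single mon_single1 by simp

lemma det_k_cong:
  assumes "\<And>i j. i < k \<Longrightarrow> j < k \<Longrightarrow> M i j = N i j"
  shows "det_k k M = det_k k N"
  unfolding det_k_def
proof (rule sum.cong[OF refl], rule arg_cong[where f="\<lambda>t. _ * t"], rule prod.cong[OF refl])
  fix p i assume "p \<in> {p. p permutes {..<k}}" "i \<in> {..<k}"
  then show "M i (p i) = N i (p i)" using assms permutes_in_image by fastforce
qed

lemma det_k_1: "det_k 1 M = M 0 0"
proof -
  have "{..<(1::nat)} = {0}" by auto
  then have "{p. p permutes {..<(1::nat)}} = {id}" by auto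
  then show ?thesis by (simp add: det_k_def)
qed

lemma det_k_2: "det_k 2 M = M 0 0 * M 1 1 - M 0 1 * M 1 0"
proof -
  have e: "{..<(2::nat)} = insert 0 {1}" by auto
  have s: "{p. p permutes {1::nat}} = {id}" by auto
  show ?thesis
    unfolding det_k_def e
    by (simp add: sum_over_permutations_insert s sign_swap_id lessThan_Suc)
qed

lemma sum_sign_zero:
  assumes "2 \<le> (k::nat)"
  shows "(\<Sum>p\<in>{p. p permutes {..<k}}. sign p) = (0::int)"
proof -
  let ?t = "transpose (0::nat) 1"
  have t: "?t permutes {..<k}" using assms by (intro permutes_swap_id) auto
  have "(\<Sum>p\<in>{p. p permutes {..<k}}. sign p) = (\<Sum>p\<in>{p. p permutes {..<k}}. sign (p \<circ> ?t))"
    by (rule sum_permutations_compose_right[OF t])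
  also have "\<dots> = (\<Sum>p\<in>{p. p permutes {..<k}}. - sign p)"
  proof (rule sum.cong[OF refl])
    fix p assume "p \<in> {p. p permutes {..<k}}"
    then have "permutation p" using permutation_permutes by blast
    moreover have "permutation ?t" using t permutation_permutes by blast
    ultimately show "sign (p \<circ> ?t) = - sign p" by (simp add: sign_compose sign_swap_id)
  qed
  finally show ?thesis by (simp add: sum_negf)
qed

lemma det_k_rank1:
  fixes f g :: "nat \<Rightarrow> int"
  assumes "2 \<le> k"
  shows "det_k k (\<lambda>i j. f i * g j) = 0"
proof -
  have "det_k k (\<lambda>i j. f i * g j) = (\<Sum>p\<in>{p. p permutes {..<k}}. of_int (sign p) * ((\<Prod>i<k. f i) * (\<Prod>i<k. g i)))"
    unfolding det_k_def
  proof (rule sum.cong[OF refl])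
    fix p assume "p \<in> {p. p permutes {..<k}}"
    then have p: "p permutes {..<k}" by simp
    have "(\<Prod>i<k. g (p i)) = (\<Prod>i<k. g i)"
      using prod.permute[OF p, of g] by (simp add: comp_def)
    then show "of_int (sign p) * (\<Prod>i<k. f i * g (p i)) = of_int (sign p) * ((\<Prod>i<k. f i) * (\<Prod>i<k. g i))"
      by (simp add: prod.distrib)
  qed
  also have "\<dots> = (\<Sum>p\<in>{p. p permutes {..<k}}. sign p) * ((\<Prod>i<k. f i) * (\<Prod>i<k. g i))"
    by (simp add: sum_distrib_right)
  finally show ?thesis using sum_sign_zero[OF assms] by simp
qed

lemma graph_equiv:
  assumes "simple_graph V E"
  shows "P3_free V E \<and> twoP2_free V E \<longleftrightarrow> complete_plus_trivial V E"
proof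
  assume H: "P3_free V E \<and> twoP2_free V E"
  have P: "\<And>a b c. a \<in> V \<Longrightarrow> b \<in> V \<Longrightarrow> c \<in> V \<Longrightarrow> distinct [a,b,c] \<Longrightarrow> E a b \<Longrightarrow> E b c \<Longrightarrow> E a c"
    using H unfolding P3_free_def by blast
  have Q: "\<And>a b c d. a \<in> V \<Longrightarrow> b \<in> V \<Longrightarrow> c \<in> V \<Longrightarrow> d \<in> V \<Longrightarrow> distinct [a,b,c,d]
       \<Longrightarrow> E a b \<Longrightarrow> E c d \<Longrightarrow> E a c \<or> E a d \<or> E b c \<or> E b d"
    using H unfolding twoP2_free_def by blast
  have irr: "\<And>u. \<not> E u u" and sym: "\<And>u v. E u v \<Longrightarrow> E v u"
    and inV: "\<And>u v. E u v \<Longrightarrow> u \<in> V \<and> v \<in> V"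
    using assms unfolding simple_graph_def by auto
  let ?K = "{u\<in>V. \<exists>v. E u v}"
  have "\<forall>u\<in>V. \<forall>v\<in>V. E u v \<longleftrightarrow> (u \<in> ?K \<and> v \<in> ?K \<and> u \<noteq> v)"
  proof (intro ballI iffI)
    fix u v assume "u \<in> V" "v \<in> V" "E u v"
    then show "u \<in> ?K \<and> v \<in> ?K \<and> u \<noteq> v" using irr sym by auto
  next
    fix u v assume uV: "u \<in> V" and vV: "v \<in> V" and h: "u \<in> ?K \<and> v \<in> ?K \<and> u \<noteq> v"
    then obtain u' v' where eu: "E u u'" and ev: "E v v'" and ne: "u \<noteq> v" by auto
    have u'V: "u' \<in> V" and v'V: "v' \<in> V" using inV eu ev by auto
    show "E u v"
    proof (rule ccontr)
      assume n: "\<not> E u v"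
      have "u' \<noteq> v" using n eu by auto
      have "v' \<noteq> u" using n ev sym by auto
      have "u \<noteq> u'" "v \<noteq> v'" using eu ev irr by auto
      have "\<not> E u v'"
      proof
        assume "E u v'" then have "E u v" using P[of u v' v] uV v'V vV ev sym ne \<open>v \<noteq> v'\<close> \<open>v' \<noteq> u\<close> by auto
        then show False using n by simp
      qed
      have "\<not> E u' v"
      proof
        assume "E u' v" then have "E u v" using P[of u u' v] uV u'V vV eu ne \<open>u \<noteq> u'\<close> \<open>u' \<noteq> v\<close> by auto
        then show False using n by simp
      qed
      have "u' \<noteq> v'" using \<open>\<not> E u v'\<close> eu by auto
      have "\<not> E u' v'"
      proof
        assume "E u' v'" then have "E u v'" using P[of u u' v'] uV u'V v'V eu \<open>u \<noteq> u'\<close> \<open>u' \<noteq> v'\<close> \<open>v' \<noteq> u\<close> by auto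
        then show False using \<open>\<not> E u v'\<close> by simp
      qed
      show False
        using Q[OF uV u'V vV v'V] eu ev n \<open>\<not> E u v'\<close> \<open>\<not> E u' v\<close> \<open>\<not> E u' v'\<close>
          \<open>u' \<noteq> v\<close> \<open>v' \<noteq> u\<close> \<open>u \<noteq> u'\<close> \<open>v \<noteq> v'\<close> \<open>u' \<noteq> v'\<close> ne by auto
    qed
  qed
  then show "complete_plus_trivial V E" unfolding complete_plus_trivial_def
    by (intro exI[of _ ?K]) auto
next
  assume "complete_plus_trivial V E"
  then obtain K where K: "K \<subseteq> V" "\<forall>u\<in>V. \<forall>v\<in>V. E u v \<longleftrightarrow> (u \<in> K \<and> v \<in> K \<and> u \<noteq> v)"
    unfolding complete_plus_trivial_def by auto
  then show "P3_free V E \<and> twoP2_free V E"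
    unfolding P3_free_def twoP2_free_def by auto
qed

lemma ideal_unit:
  assumes "u \<in> S" "u = 1 \<or> u = -1"
  shows "ideal_gen S = UNIV"
proof -
  have "y \<in> ideal_gen S" for y
    unfolding ideal_gen_def
    by (rule CollectI, rule exI[of _ "{u}"], rule exI[of _ "\<lambda>_. y * u"]) (use assms in auto)
  then show ?thesis by auto
qed

lemma sorted2: "(a::'a::linorder) < b \<Longrightarrow> sorted_list_of_set {a, b} = [a, b]"
  by auto

lemma minor_1: "minor M {a} {b} = M a b"
  using det_k_1[of "\<lambda>i j. M ([a] ! i) ([b] ! j)"] by (simp add: minor_def)

lemma minor_2:
  fixes M :: "'a::linorder \<Rightarrow> 'a \<Rightarrow> 'b::comm_ring_1"
  assumes "r1 \<noteq> r2" "c1 \<noteq> c2"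
  shows "minor M {r1,r2} {c1,c2} = (M r1 c1 * M r2 c2 - M r1 c2 * M r2 c1)
       \<or> minor M {r1,r2} {c1,c2} = -(M r1 c1 * M r2 c2 - M r1 c2 * M r2 c1)"
proof -
  have c: "card {r1,r2} = 2" using assms by simp
  have m: "minor M {r1,r2} {c1,c2} = det_k 2 (\<lambda>i j. M (sorted_list_of_set {r1,r2} ! i) (sorted_list_of_set {c1,c2} ! j))"
    unfolding minor_def c ..
  have r: "sorted_list_of_set {r1,r2} = [r1,r2] \<or> sorted_list_of_set {r1,r2} = [r2,r1]"
    using assms by (cases "r1 < r2") (auto simp: insert_commute neq_iff)
  have cc: "sorted_list_of_set {c1,c2} = [c1,c2] \<or> sorted_list_of_set {c1,c2} = [c2,c1]"
    using assms by (cases "c1 < c2") (auto simp: insert_commute neq_iff)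
  show ?thesis unfolding m det_k_2 using r cc
    by (elim disjE) (simp_all add: algebra_simps)
qed

lemma crit_univ:
  assumes "finite V" "R \<subseteq> V" "C \<subseteq> V" "card R = i" "card C = i" "1 \<le> i"
    and "minor (gen_laplacian E) R C = 1 \<or> minor (gen_laplacian E) R C = -1"
  shows "critical_ideal V E i = UNIV"
proof -
  have "i \<le> card V" using card_mono[OF assms(1,2)] assms(4) by simp
  then show ?thesis
    unfolding critical_ideal_def using assms
    by (auto intro!: ideal_unit[of "minor (gen_laplacian E) R C"])
qed

lemma not_free_corank:
  assumes G: "simple_graph V E" and nf: "\<not> (P3_free V E \<and> twoP2_free V E)"
  shows "\<not> alg_corank V E \<le> 1"
proof -
  have fin: "finite V" and irr: "\<And>u. \<not> E u u" using G unfolding simple_graph_def by auto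
  let ?L = "gen_laplacian E"
  have Lne: "\<And>u v. u \<noteq> v \<Longrightarrow> ?L u v = (if E u v then -1 else 0)"
    by (simp add: gen_laplacian_def)
  obtain a b R C where ab: "a \<in> V" "b \<in> V" "E a b" and RC: "R \<subseteq> V" "C \<subseteq> V" "card R = 2" "card C = 2"
    "minor ?L R C = 1 \<or> minor ?L R C = -1"
  proof (cases "P3_free V E")
    case False
    then obtain a b c where abc: "a \<in> V" "b \<in> V" "c \<in> V" "distinct [a,b,c]" "E a b" "E b c" "\<not> E a c"
      unfolding P3_free_def by blast
    have "minor ?L {a,b} {b,c} = 1 \<or> minor ?L {a,b} {b,c} = -1"
      using minor_2[of a b b c ?L] abc by (simp add: Lne)
    then show ?thesis using that[of a b "{a,b}" "{b,c}"] abc by auto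
  next
    case True
    then have "\<not> twoP2_free V E" using nf by simp
    then obtain a b c d where abcd: "a \<in> V" "b \<in> V" "c \<in> V" "d \<in> V" "distinct [a,b,c,d]" "E a b" "E c d"
      "\<not> E a c" "\<not> E a d" "\<not> E b c" "\<not> E b d"
      unfolding twoP2_free_def by blast
    have "minor ?L {a,c} {b,d} = 1 \<or> minor ?L {a,c} {b,d} = -1"
      using minor_2[of a c b d ?L] abcd by (simp add: Lne)
    then show ?thesis using that[of a b "{a,c}" "{b,d}"] abcd by auto
  qed
  have "a \<noteq> b" using ab irr by auto
  have c1: "critical_ideal V E 1 = UNIV"
    by (rule crit_univ[of V "{a}" "{b}"]) (use fin ab \<open>a \<noteq> b\<close> in \<open>auto simp: minor_1 Lne\<close>)
  have c2: "critical_ideal V E 2 = UNIV"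
    by (rule crit_univ[OF fin RC(1,2,3,4)]) (use RC in auto)
  have "card V \<ge> 2" using card_mono[OF fin RC(1)] RC(3) by simp
  then have "{1,2} \<subseteq> {i \<in> {1..card V}. critical_ideal V E i = UNIV}" using c1 c2 by auto
  then have "card {1::nat,2} \<le> alg_corank V E" unfolding alg_corank_def
    by (rule card_mono[rotated]) simp
  then show ?thesis by simp
qed

lemma cpt_corank:
  assumes G: "simple_graph V E" and cpt: "complete_plus_trivial V E"
  shows "alg_corank V E \<le> 1"
proof -
  have fin: "finite V" using G unfolding simple_graph_def by auto
  obtain K where K: "K \<subseteq> V" "\<forall>u\<in>V. \<forall>v\<in>V. E u v \<longleftrightarrow> (u \<in> K \<and> v \<in> K \<and> u \<noteq> v)"
    using cpt unfolding complete_plus_trivial_def by auto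
  define x where "x = (\<lambda>u. if u \<in> K then -1 else (0::int))"
  let ?L = "gen_laplacian E"
  have entry: "ev x (?L u v) = (if u \<in> K then -1 else 0) * (if v \<in> K then 1 else 0)"
    if "u \<in> V" "v \<in> V" for u v
    using K that by (cases "u = v") (auto simp: gen_laplacian_def x_def)
  have mem: "sorted_list_of_set R ! j \<in> V" if "R \<subseteq> V" "j < card R" for R j
  proof -
    have "finite R" using that fin finite_subset by blast
    then show ?thesis using that nth_mem[of j "sorted_list_of_set R"] by auto
  qed
  have min0: "ev x (minor ?L R C) = 0"
    if "R \<subseteq> V" "C \<subseteq> V" "card R = i" "card C = i" "2 \<le> i" for R C i
  proof -
    have "ev x (minor ?L R C) = det_k i (\<lambda>a b. (if sorted_list_of_set R ! a \<in> K then -1 else 0) *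
        (if sorted_list_of_set C ! b \<in> K then 1 else 0))"
      unfolding minor_def ev_det \<open>card R = i\<close>
      by (rule det_k_cong) (use that mem entry in auto)
    also have "\<dots> = 0" by (rule det_k_rank1) fact
    finally show ?thesis .
  qed
  have notU: "critical_ideal V E i \<noteq> UNIV" if "2 \<le> i" "i \<le> card V" for i
  proof
    assume "critical_ideal V E i = UNIV"
    then have "1 \<in> ideal_gen {minor ?L R C | R C. R \<subseteq> V \<and> C \<subseteq> V \<and> card R = i \<and> card C = i}"
      unfolding critical_ideal_def using that by (simp split: if_splits)
    then obtain F c where F: "finite F" "F \<subseteq> {minor ?L R C | R C. R \<subseteq> V \<and> C \<subseteq> V \<and> card R = i \<and> card C = i}"
      "1 = (\<Sum>f\<in>F. c f * f)"
      unfolding ideal_gen_def by blast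
    have "ev x (\<Sum>f\<in>F. c f * f) = (\<Sum>f\<in>F. ev x (c f) * ev x f)" by (simp add: ev_sum ev_mult)
    also have "\<dots> = 0"
    proof (rule sum.neutral, rule ballI)
      fix f assume "f \<in> F"
      then obtain R C where "f = minor ?L R C" "R \<subseteq> V" "C \<subseteq> V" "card R = i" "card C = i" using F by blast
      then show "ev x (c f) * ev x f = 0" using min0 that by auto
    qed
    finally show False using F(3) by (metis ev_one zero_neq_one)
  qed
  have "{i \<in> {1..card V}. critical_ideal V E i = UNIV} \<subseteq> {1}"
  proof
    fix i assume "i \<in> {i \<in> {1..card V}. critical_ideal V E i = UNIV}"
    then have "1 \<le> i" "i \<le> card V" "critical_ideal V E i = UNIV" by auto
    then show "i \<in> {1}" using notU[of i] by (cases "2 \<le> i") auto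
  qed
  then have "alg_corank V E \<le> card {1::nat}" unfolding alg_corank_def
    by (rule card_mono[rotated]) simp
  then show ?thesis by simp
qed

theorem corollary3p6:
  fixes V :: "'a::linorder set" and E :: "'a \<Rightarrow> 'a \<Rightarrow> bool"
  assumes "simple_graph V E"
  shows "(alg_corank V E \<le> 1 \<longleftrightarrow> P3_free V E \<and> twoP2_free V E)
       \<and> (P3_free V E \<and> twoP2_free V E \<longleftrightarrow> complete_plus_trivial V E)"
  using graph_equiv[OF assms] not_free_corank[OF assms] cpt_corank[OF assms] by blast

end
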